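(* Let $B$ be a supersoluble brace. If $B$ is left-nilpotent and $\operatorname{Ker}(\lambda)\le Z_n(B,\cdot)$ for some $n\in\mathbb{N}$, then $(B,\cdot)$ is nilpotent.
   Context: A brace (skew left brace) is a set $B$ with two binary operations $+$ and $\cdot$ such that $(B,+)$ and $(B,\cdot)$ are groups and $a(b+c)=ab-a+ac$ for all $a,b,c\in B$. $\lambda_a(b)=-a+ab$ defines a homomorphism $\lambda\colon(B,\cdot)\to\operatorname{Aut}(B,+)$; $a*b=-a+ab-b$; for subsets $X,Y$, $X*Y$ is the subgroup of $(B,+)$ generated by all $x*y$, $x\in X,y\in Y$. $B$ is left-nilpotent if, with $L_0=B$ and $L_{k+1}=B*L_k$, one has $L_m=\{0\}$ for some $m$. $Z_n(B,\cdot)$ is the $n$-th term of the upper central series of the group $(B,\cdot)$. An ideal is a subset that is a subgroup of both groups, normal in both, and invariant under all $\lambda_b$; quotients by ideals are braces. $\operatorname{Soc}(B)=\operatorname{Ker}\lambda\cap Z(B,+)$. $B$ is supersoluble if there is a finite chain of ideals $\{0\}=I_0\le\dots\le I_n=B$ such that for each $i$, either $(I_{i+1}/I_i,+)$ is infinite cyclic and $I_{i+1}/I_i\le\operatorname{Soc}(B/I_i)$, or $I_{i+1}/I_i$ has prime order. *)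

theory Defs
  imports "HOL-Algebra.Algebra"
begin

text \<open>A (skew left) brace is given by two group structures A (the additive group (B,+))
and M (the multiplicative group (B,.)) on the same carrier B.\<close>

definition brace :: "'a monoid \<Rightarrow> 'a monoid \<Rightarrow> bool" where
  "brace A M \<longleftrightarrow> group A \<and> group M \<and> carrier A = carrier M \<and>
     (\<forall>a\<in>carrier A. \<forall>b\<in>carrier A. \<forall>c\<in>carrier A.
        a \<otimes>\<^bsub>M\<^esub> (b \<otimes>\<^bsub>A\<^esub> c)
          = (a \<otimes>\<^bsub>M\<^esub> b) \<otimes>\<^bsub>A\<^esub> inv\<^bsub>A\<^esub> a \<otimes>\<^bsub>A\<^esub> (a \<otimes>\<^bsub>M\<^esub> c))"

definition brace_lambda :: "'a monoid \<Rightarrow> 'a monoid \<Rightarrow> 'a \<Rightarrow> 'a \<Rightarrow> 'a" where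
  "brace_lambda A M a b = inv\<^bsub>A\<^esub> a \<otimes>\<^bsub>A\<^esub> (a \<otimes>\<^bsub>M\<^esub> b)"

definition brace_star :: "'a monoid \<Rightarrow> 'a monoid \<Rightarrow> 'a \<Rightarrow> 'a \<Rightarrow> 'a" where
  "brace_star A M a b = inv\<^bsub>A\<^esub> a \<otimes>\<^bsub>A\<^esub> (a \<otimes>\<^bsub>M\<^esub> b) \<otimes>\<^bsub>A\<^esub> inv\<^bsub>A\<^esub> b"

definition brace_star_set :: "'a monoid \<Rightarrow> 'a monoid \<Rightarrow> 'a set \<Rightarrow> 'a set \<Rightarrow> 'a set" where
  "brace_star_set A M S T = generate A ((\<lambda>(x, y). brace_star A M x y) ` (S \<times> T))"

fun left_series :: "'a monoid \<Rightarrow> 'a monoid \<Rightarrow> nat \<Rightarrow> 'a set" where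
  "left_series A M 0 = carrier A"
| "left_series A M (Suc k) = brace_star_set A M (carrier A) (left_series A M k)"

definition left_nilpotent :: "'a monoid \<Rightarrow> 'a monoid \<Rightarrow> bool" where
  "left_nilpotent A M \<longleftrightarrow> (\<exists>m. left_series A M m = {\<one>\<^bsub>A\<^esub>})"

definition brace_ker_lambda :: "'a monoid \<Rightarrow> 'a monoid \<Rightarrow> 'a set" where
  "brace_ker_lambda A M = {a \<in> carrier A. \<forall>b\<in>carrier A. brace_lambda A M a b = b}"

definition group_center :: "('a, 'b) monoid_scheme \<Rightarrow> 'a set" where
  "group_center G = {x \<in> carrier G. \<forall>y\<in>carrier G. x \<otimes>\<^bsub>G\<^esub> y = y \<otimes>\<^bsub>G\<^esub> x}"

definition brace_soc :: "'a monoid \<Rightarrow> 'a monoid \<Rightarrow> 'a set" where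
  "brace_soc A M = brace_ker_lambda A M \<inter> group_center A"

definition brace_ideal :: "'a monoid \<Rightarrow> 'a monoid \<Rightarrow> 'a set \<Rightarrow> bool" where
  "brace_ideal A M I \<longleftrightarrow> subgroup I A \<and> subgroup I M \<and> I \<lhd> A \<and> I \<lhd> M \<and>
     (\<forall>b\<in>carrier A. \<forall>x\<in>I. brace_lambda A M b x \<in> I)"

text \<open>Quotient brace B/I: carrier the cosets x+I (which coincide with xI for an ideal);
 addition and multiplication of cosets as complex products.\<close>
definition quot_add :: "'a monoid \<Rightarrow> 'a set \<Rightarrow> 'a set monoid" where
  "quot_add A I = A Mod I"

definition quot_mult :: "'a monoid \<Rightarrow> 'a monoid \<Rightarrow> 'a set \<Rightarrow> 'a set monoid" where
  "quot_mult A M I = \<lparr>carrier = rcosets\<^bsub>A\<^esub> I, monoid.mult = set_mult M, one = I\<rparr>"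

definition quot_sub :: "'a monoid \<Rightarrow> 'a set \<Rightarrow> 'a set \<Rightarrow> 'a set set" where
  "quot_sub A I J = (\<lambda>x. I #>\<^bsub>A\<^esub> x) ` J"

definition supersoluble_brace :: "'a monoid \<Rightarrow> 'a monoid \<Rightarrow> bool" where
  "supersoluble_brace A M \<longleftrightarrow> brace A M \<and>
    (\<exists>(I :: nat \<Rightarrow> 'a set) n. I 0 = {\<one>\<^bsub>A\<^esub>} \<and> I n = carrier A \<and>
      (\<forall>i\<le>n. brace_ideal A M (I i)) \<and>
      (\<forall>i<n. I i \<subseteq> I (Suc i) \<and>
         (let F = quot_sub A (I i) (I (Suc i)) in
           (infinite F \<and> (\<exists>g\<in>F. generate (quot_add A (I i)) {g} = F) \<and>
              F \<subseteq> brace_soc (quot_add A (I i)) (quot_mult A M (I i)))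
           \<or> Factorial_Ring.prime (card F))))"

text \<open>Upper central series of a group: Z_0 = 1, Z_(k+1)/Z_k = Z(G/Z_k).\<close>
fun upper_central :: "('a, 'b) monoid_scheme \<Rightarrow> nat \<Rightarrow> 'a set" where
  "upper_central G 0 = {\<one>\<^bsub>G\<^esub>}"
| "upper_central G (Suc k) = {x \<in> carrier G. \<forall>y\<in>carrier G.
      x \<otimes>\<^bsub>G\<^esub> y \<otimes>\<^bsub>G\<^esub> inv\<^bsub>G\<^esub> x \<otimes>\<^bsub>G\<^esub> inv\<^bsub>G\<^esub> y \<in> upper_central G k}"

definition nilpotent_group :: "('a, 'b) monoid_scheme \<Rightarrow> bool" where
  "nilpotent_group G \<longleftrightarrow> group G \<and> (\<exists>c. upper_central G c = carrier G)"

end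

theory Submission
  imports Defs
begin


locale brc = A: group A + M: group M for A M :: "'a monoid" +
  assumes carr: "carrier M = carrier A"
  and ax: "\<And>a b c. a \<in> carrier A \<Longrightarrow> b \<in> carrier A \<Longrightarrow> c \<in> carrier A \<Longrightarrow>
     a \<otimes>\<^bsub>M\<^esub> (b \<otimes>\<^bsub>A\<^esub> c)
          = (a \<otimes>\<^bsub>M\<^esub> b) \<otimes>\<^bsub>A\<^esub> inv\<^bsub>A\<^esub> a \<otimes>\<^bsub>A\<^esub> (a \<otimes>\<^bsub>M\<^esub> c)"

lemma brace_brc: "brace A M \<Longrightarrow> brc A M"
  unfolding brace_def brc_def brc_axioms_def by auto

context brc begin

lemma multM_closed[simp]: "a \<in> carrier A \<Longrightarrow> b \<in> carrier A \<Longrightarrow> a \<otimes>\<^bsub>M\<^esub> b \<in> carrier A"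
  using M.m_closed carr by auto

lemma invM_closed[simp]: "a \<in> carrier A \<Longrightarrow> inv\<^bsub>M\<^esub> a \<in> carrier A"
  using M.inv_closed carr by auto

lemma one_eq: "\<one>\<^bsub>M\<^esub> = \<one>\<^bsub>A\<^esub>"
proof -
  have o: "\<one>\<^bsub>M\<^esub> \<in> carrier A" using carr by auto
  have "\<one>\<^bsub>M\<^esub> \<otimes>\<^bsub>M\<^esub> (\<one>\<^bsub>A\<^esub> \<otimes>\<^bsub>A\<^esub> \<one>\<^bsub>A\<^esub>) = (\<one>\<^bsub>M\<^esub> \<otimes>\<^bsub>M\<^esub> \<one>\<^bsub>A\<^esub>) \<otimes>\<^bsub>A\<^esub> inv\<^bsub>A\<^esub> \<one>\<^bsub>M\<^esub> \<otimes>\<^bsub>A\<^esub> (\<one>\<^bsub>M\<^esub> \<otimes>\<^bsub>M\<^esub> \<one>\<^bsub>A\<^esub>)"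
    using ax[OF o A.one_closed A.one_closed] .
  moreover have "\<one>\<^bsub>M\<^esub> \<otimes>\<^bsub>M\<^esub> \<one>\<^bsub>A\<^esub> = \<one>\<^bsub>A\<^esub>"
    using carr M.l_one by (metis A.one_closed)
  ultimately have "\<one>\<^bsub>A\<^esub> = inv\<^bsub>A\<^esub> \<one>\<^bsub>M\<^esub>"
    using o by simp
  thus ?thesis using o by (metis A.inv_inv A.inv_one)
qed

definition lam where "lam a b = inv\<^bsub>A\<^esub> a \<otimes>\<^bsub>A\<^esub> (a \<otimes>\<^bsub>M\<^esub> b)"

lemma lam_eq: "brace_lambda A M = lam" unfolding brace_lambda_def lam_def by (intro ext) simp

lemma lam_closed[simp]: "a \<in> carrier A \<Longrightarrow> b \<in> carrier A \<Longrightarrow> lam a b \<in> carrier A"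
  unfolding lam_def by simp

lemma lam_add: "a \<in> carrier A \<Longrightarrow> b \<in> carrier A \<Longrightarrow> c \<in> carrier A \<Longrightarrow>
   lam a (b \<otimes>\<^bsub>A\<^esub> c) = lam a b \<otimes>\<^bsub>A\<^esub> lam a c"
  unfolding lam_def using ax by (simp add: A.m_assoc)

lemma lam_one: "a \<in> carrier A \<Longrightarrow> lam a \<one>\<^bsub>A\<^esub> = \<one>\<^bsub>A\<^esub>"
  unfolding lam_def using carr by (metis A.l_inv M.r_one one_eq)

lemma lam_inv: "a \<in> carrier A \<Longrightarrow> b \<in> carrier A \<Longrightarrow> lam a (inv\<^bsub>A\<^esub> b) = inv\<^bsub>A\<^esub> (lam a b)"
proof -
  assume a: "a \<in> carrier A" and b: "b \<in> carrier A"
  have "lam a b \<otimes>\<^bsub>A\<^esub> lam a (inv\<^bsub>A\<^esub> b) = \<one>\<^bsub>A\<^esub>"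
    using lam_add[OF a b, of "inv\<^bsub>A\<^esub> b"] a b lam_one by simp
  thus ?thesis using a b by (metis A.inv_closed A.inv_equality A.inv_inv lam_closed)
qed

lemma lam_comp: "a \<in> carrier A \<Longrightarrow> b \<in> carrier A \<Longrightarrow> c \<in> carrier A \<Longrightarrow>
   lam (a \<otimes>\<^bsub>M\<^esub> b) c = lam a (lam b c)"
proof -
  assume a: "a \<in> carrier A" and b: "b \<in> carrier A" and c: "c \<in> carrier A"
  have "lam a (lam b c) = lam a (inv\<^bsub>A\<^esub> b) \<otimes>\<^bsub>A\<^esub> lam a (b \<otimes>\<^bsub>M\<^esub> c)"
    unfolding lam_def[of b c] using lam_add a b c by simp
  also have "\<dots> = inv\<^bsub>A\<^esub> (inv\<^bsub>A\<^esub> a \<otimes>\<^bsub>A\<^esub> (a \<otimes>\<^bsub>M\<^esub> b)) \<otimes>\<^bsub>A\<^esub> (inv\<^bsub>A\<^esub> a \<otimes>\<^bsub>A\<^esub> (a \<otimes>\<^bsub>M\<^esub> (b \<otimes>\<^bsub>M\<^esub> c)))"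
    using lam_inv a b c by (simp add: lam_def)
  also have "\<dots> = inv\<^bsub>A\<^esub> (a \<otimes>\<^bsub>M\<^esub> b) \<otimes>\<^bsub>A\<^esub> ((a \<otimes>\<^bsub>M\<^esub> b) \<otimes>\<^bsub>M\<^esub> c)"
    using a b c carr by (simp add: A.inv_mult_group A.m_assoc M.m_assoc A.r_inv flip: A.m_assoc[of "a" "inv\<^bsub>A\<^esub> a"])
  finally show ?thesis unfolding lam_def by simp
qed

lemma lam_oneM: "b \<in> carrier A \<Longrightarrow> lam \<one>\<^bsub>M\<^esub> b = b"
  unfolding lam_def using carr one_eq by (simp add: M.l_one)

lemma lam_hom: "a \<in> carrier A \<Longrightarrow> lam a \<in> hom A A"
  by (auto intro!: homI simp: lam_add)

lemma star_eq: "a \<in> carrier A \<Longrightarrow> b \<in> carrier A \<Longrightarrow> brace_star A M a b = lam a b \<otimes>\<^bsub>A\<^esub> inv\<^bsub>A\<^esub> b"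
  unfolding brace_star_def lam_def by simp

end



lemma prime_sub_cyclic:
  assumes G: "group G" and F: "subgroup F G" and p: "Factorial_Ring.prime (card F)"
  shows "\<exists>h\<in>F. F = {h [^]\<^bsub>G\<^esub> (k::int) | k. k \<in> UNIV} \<and> (\<forall>f\<in>F. f [^]\<^bsub>G\<^esub> (card F) = \<one>\<^bsub>G\<^esub>)"
proof -
  interpret G: group G by fact
  have fin: "finite F" proof (rule ccontr) assume "infinite F" then have "card F = 0" by simp then show False using p by simp qed
  let ?G' = "G\<lparr>carrier := F\<rparr>"
  interpret G': group ?G' by (rule subgroup.subgroup_is_group[OF F G])
  have dv: "G.ord f dvd card F" if f: "f \<in> F" for f
  proof -
    have fc: "f \<in> carrier G" using subgroup.mem_carrier[OF F f] .
    have sub: "subgroup (generate G {f}) G" by (rule G.generate_is_subgroup) (use fc in auto)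
    have inc: "generate G {f} \<subseteq> F" by (rule G.generate_subgroup_incl) (use f F in auto)
    have "subgroup (generate G {f}) ?G'" using G.subgroup_incl[OF sub F inc] .
    then have "card (rcosets\<^bsub>?G'\<^esub> (generate G {f})) * card (generate G {f}) = order ?G'"
      by (rule G'.lagrange)
    moreover have "order ?G' = card F" by (simp add: order_def)
    moreover have "card (generate G {f}) = G.ord f" using G.generate_pow_card[OF fc] by (rule sym)
    ultimately show ?thesis by (metis dvd_triv_right)
  qed
  have pw: "f [^]\<^bsub>G\<^esub> card F = \<one>\<^bsub>G\<^esub>" if "f \<in> F" for f
    using dv[OF that] G.pow_eq_id subgroup.mem_carrier[OF F that] by blast
  have "\<not> F \<subseteq> {\<one>\<^bsub>G\<^esub>}"
  proof
    assume "F \<subseteq> {\<one>\<^bsub>G\<^esub>}"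
    then have "card F \<le> 1" using card_mono[of "{\<one>\<^bsub>G\<^esub>}" F] by simp
    then show False using prime_gt_1_nat[OF p] by linarith
  qed
  then obtain h where h: "h \<in> F" "h \<noteq> \<one>\<^bsub>G\<^esub>" by blast
  have hc: "h \<in> carrier G" using subgroup.mem_carrier[OF F h(1)] .
  have "G.ord h \<noteq> 1" using G.ord_eq_1[OF hc] h(2) by blast
  then have oh: "G.ord h = card F" using dv[OF h(1)] p unfolding prime_nat_iff by blast
  have inc: "generate G {h} \<subseteq> F" by (rule G.generate_subgroup_incl) (use h F in auto)
  have "card (generate G {h}) = card F" using G.generate_pow_card[OF hc] oh by (rule trans[OF sym])
  then have "generate G {h} = F" using inc fin card_subset_eq by blast
  then have "F = {h [^]\<^bsub>G\<^esub> (k::int) | k. k \<in> UNIV}" using G.generate_pow[OF hc] by simp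
  then show ?thesis using h pw by blast
qed




locale ssb = brc +
  fixes I :: "nat \<Rightarrow> 'a set" and n :: nat
  assumes I0: "I 0 = {\<one>\<^bsub>A\<^esub>}" and In: "I n = carrier A"
  and idl: "\<And>i. i \<le> n \<Longrightarrow> brace_ideal A M (I i)"
  and mono1: "\<And>i. i < n \<Longrightarrow> I i \<subseteq> I (Suc i)"
  and fac: "\<And>i. i < n \<Longrightarrow> (infinite (quot_sub A (I i) (I (Suc i))) \<and>
      (\<exists>g\<in>quot_sub A (I i) (I (Suc i)). generate (A Mod (I i)) {g} = quot_sub A (I i) (I (Suc i))))
      \<or> Factorial_Ring.prime (card (quot_sub A (I i) (I (Suc i))))"

context ssb begin

lemma subI: "i \<le> n \<Longrightarrow> subgroup (I i) A"
  using idl unfolding brace_ideal_def by blast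

lemma normI: "i \<le> n \<Longrightarrow> I i \<lhd> A"
  using idl unfolding brace_ideal_def by blast

lemma lamI: "i \<le> n \<Longrightarrow> b \<in> carrier A \<Longrightarrow> x \<in> I i \<Longrightarrow> lam b x \<in> I i"
  using idl unfolding brace_ideal_def lam_eq by blast

lemma IA: "i \<le> n \<Longrightarrow> I i \<subseteq> carrier A"
  using subI subgroup.subset by blast

lemma monoI: "j \<le> k \<Longrightarrow> k \<le> n \<Longrightarrow> I j \<subseteq> I k"
proof (induction k rule: dec_induct)
  case base
  then show ?case by simp
next
  case (step k)
  then show ?case using mono1[of k] by auto
qed

lemma T:
  assumes LN: "left_series A M m = {\<one>\<^bsub>A\<^esub>}" and i: "i < n" and b: "b \<in> carrier A"
    and x0: "x0 \<in> I (Suc i)"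
  shows "inv\<^bsub>A\<^esub> x0 \<otimes>\<^bsub>A\<^esub> lam b x0 \<in> I i"
proof (rule ccontr)
  assume nx: "inv\<^bsub>A\<^esub> x0 \<otimes>\<^bsub>A\<^esub> lam b x0 \<notin> I i"
  define J where "J = I i"
  define K where "K = I (Suc i)"
  have nJ: "J \<lhd> A" using normI i unfolding J_def by simp
  have sJ: "subgroup J A" using subI i unfolding J_def by simp
  have sK: "subgroup K A" using subI i unfolding K_def by simp
  have KA: "K \<subseteq> carrier A" using IA i unfolding K_def by simp
  have JA: "J \<subseteq> carrier A" using IA i unfolding J_def by simp
  have JK: "J \<subseteq> K" using mono1 i unfolding J_def K_def by simp
  have lamJ: "\<And>x. x \<in> J \<Longrightarrow> lam b x \<in> J" using lamI i b unfolding J_def by simp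
  have lamK: "\<And>x. x \<in> K \<Longrightarrow> lam b x \<in> K" using lamI i b unfolding K_def by simp
  have x0K: "x0 \<in> K" using x0 K_def by simp
  have x0c: "x0 \<in> carrier A" using x0K KA by auto
  interpret N: normal J A by (rule nJ)
  interpret Q: group "A Mod J" by (rule N.factorgroup_is_group)
  define \<pi> where "\<pi> = (\<lambda>x. J #>\<^bsub>A\<^esub> x)"
  have hom: "\<pi> \<in> hom A (A Mod J)" using N.r_coset_hom_Mod unfolding \<pi>_def .
  interpret P: group_hom A "A Mod J" \<pi>
    using hom unfolding group_hom_def group_hom_axioms_def
    using A.group_axioms Q.group_axioms by blast
  have oneQ: "\<one>\<^bsub>A Mod J\<^esub> = J" by (simp add: FactGroup_def)
  have piJ: "\<pi> x = \<one>\<^bsub>A Mod J\<^esub> \<longleftrightarrow> x \<in> J" if xc: "x \<in> carrier A" for x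
  proof
    assume "\<pi> x = \<one>\<^bsub>A Mod J\<^esub>"
    then have "J #>\<^bsub>A\<^esub> x = J" unfolding \<pi>_def oneQ .
    then show "x \<in> J" using A.rcos_self[OF xc sJ] by simp
  next
    assume "x \<in> J"
    then show "\<pi> x = \<one>\<^bsub>A Mod J\<^esub>" unfolding \<pi>_def oneQ
      using N.rcos_const[OF A.group_axioms] by simp
  qed
  have pieq: "x \<otimes>\<^bsub>A\<^esub> inv\<^bsub>A\<^esub> y \<in> J"
    if xc: "x \<in> carrier A" and yc: "y \<in> carrier A" and e: "\<pi> x = \<pi> y" for x y
  proof -
    have "x \<in> J #>\<^bsub>A\<^esub> y" using A.rcos_self[OF xc sJ] e unfolding \<pi>_def by simp
    then show ?thesis using N.rcos_module_imp[OF A.group_axioms yc] by simp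
  qed
  have pilam: "\<pi> (lam b x) = \<pi> (lam b y)"
    if xc: "x \<in> carrier A" and yc: "y \<in> carrier A" and e: "\<pi> x = \<pi> y" for x y
  proof -
    define z where "z = lam b x \<otimes>\<^bsub>A\<^esub> inv\<^bsub>A\<^esub> (lam b y)"
    have "z = lam b (x \<otimes>\<^bsub>A\<^esub> inv\<^bsub>A\<^esub> y)" unfolding z_def using lam_add lam_inv b xc yc by simp
    then have zJ: "z \<in> J" using lamJ pieq[OF xc yc e] by simp
    have zc: "z \<in> carrier A" using zJ JA by auto
    have "lam b x = z \<otimes>\<^bsub>A\<^esub> lam b y" unfolding z_def using b xc yc by (simp add: A.m_assoc)
    then have "\<pi> (lam b x) = \<pi> z \<otimes>\<^bsub>A Mod J\<^esub> \<pi> (lam b y)" using zc b yc by simp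
    also have "\<dots> = \<one>\<^bsub>A Mod J\<^esub> \<otimes>\<^bsub>A Mod J\<^esub> \<pi> (lam b y)"
      using piJ[OF zc] zJ by (simp only: simp_thms)
    also have "\<dots> = \<pi> (lam b y)" by (rule Q.l_one) (use b yc in simp)
    finally show ?thesis .
  qed
  define F where "F = \<pi> ` K"
  have Fq: "quot_sub A J K = F" unfolding quot_sub_def F_def \<pi>_def by simp
  have sF: "subgroup F (A Mod J)" unfolding F_def using P.subgroup_img_is_subgroup[OF sK] .
  have FQ: "F \<subseteq> carrier (A Mod J)" using sF subgroup.subset by blast
  have fac': "(infinite F \<and> (\<exists>g\<in>F. generate (A Mod J) {g} = F)) \<or> Factorial_Ring.prime (card F)"
    using fac[OF i] Fq unfolding J_def K_def by simp
  have gen_t: "\<exists>t. \<forall>x\<in>K. \<pi> (lam b x) = \<pi> x [^]\<^bsub>A Mod J\<^esub> (t::int)"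
    if g: "g \<in> K" and Fg: "F = {\<pi> g [^]\<^bsub>A Mod J\<^esub> (k::int) | k. k \<in> UNIV}" for g
  proof -
    have gc: "g \<in> carrier A" using g KA by auto
    have lgc: "lam b g \<in> carrier A" using gc b by simp
    have "\<pi> (lam b g) \<in> F" using lamK[OF g] unfolding F_def by simp
    then have "\<pi> (lam b g) \<in> {\<pi> g [^]\<^bsub>A Mod J\<^esub> (k::int) | k. k \<in> UNIV}" by (simp only: Fg)
    then obtain t where t: "\<pi> (lam b g) = \<pi> g [^]\<^bsub>A Mod J\<^esub> (t::int)" by blast
    interpret L: group_hom A A "lam b"
      unfolding group_hom_def group_hom_axioms_def using lam_hom[OF b] A.group_axioms by blast
    have "\<pi> (lam b x) = \<pi> x [^]\<^bsub>A Mod J\<^esub> t" if x: "x \<in> K" for x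
    proof -
      have xc: "x \<in> carrier A" using x KA by auto
      have "\<pi> x \<in> F" using x unfolding F_def by simp
      then have "\<pi> x \<in> {\<pi> g [^]\<^bsub>A Mod J\<^esub> (k::int) | k. k \<in> UNIV}" by (simp only: Fg)
      then obtain k where k: "\<pi> x = \<pi> g [^]\<^bsub>A Mod J\<^esub> (k::int)" by blast
      have pg: "\<pi> g \<in> carrier (A Mod J)" using gc by simp
      have "\<pi> x = \<pi> (g [^]\<^bsub>A\<^esub> k)" using k P.hom_int_pow[OF gc] by simp
      then have "\<pi> (lam b x) = \<pi> (lam b (g [^]\<^bsub>A\<^esub> k))" using pilam[OF xc] gc by simp
      also have "\<dots> = \<pi> ((lam b g) [^]\<^bsub>A\<^esub> k)" using L.hom_int_pow[OF gc] by simp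
      also have "\<dots> = (\<pi> g [^]\<^bsub>A Mod J\<^esub> t) [^]\<^bsub>A Mod J\<^esub> k" using P.hom_int_pow[OF lgc] t by simp
      also have "\<dots> = \<pi> g [^]\<^bsub>A Mod J\<^esub> (k * t)" using Q.int_pow_pow[OF pg] by (simp add: mult.commute)
      also have "\<dots> = \<pi> x [^]\<^bsub>A Mod J\<^esub> t" using Q.int_pow_pow[OF pg] k by simp
      finally show ?thesis .
    qed
    then show ?thesis by blast
  qed
  have x0J: "x0 \<notin> J"
  proof
    assume "x0 \<in> J"
    then have "inv\<^bsub>A\<^esub> x0 \<otimes>\<^bsub>A\<^esub> lam b x0 \<in> J"
      using lamJ sJ by (simp add: subgroup.m_closed subgroup.m_inv_closed)
    then show False using nx unfolding J_def by simp
  qed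
  have starJ: "brace_star A M b y \<notin> J" if y: "y \<in> carrier A" "inv\<^bsub>A\<^esub> y \<otimes>\<^bsub>A\<^esub> lam b y \<notin> J" for y
  proof
    assume "brace_star A M b y \<in> J"
    then have "inv\<^bsub>A\<^esub> y \<otimes>\<^bsub>A\<^esub> brace_star A M b y \<otimes>\<^bsub>A\<^esub> y \<in> J"
      using N.inv_op_closed1 y by blast
    also have "inv\<^bsub>A\<^esub> y \<otimes>\<^bsub>A\<^esub> brace_star A M b y \<otimes>\<^bsub>A\<^esub> y = inv\<^bsub>A\<^esub> y \<otimes>\<^bsub>A\<^esub> lam b y"
      using star_eq b y by (simp add: A.m_assoc)
    finally show False using y by simp
  qed
  obtain t where t: "\<forall>x\<in>K. \<pi> (lam b x) = \<pi> x [^]\<^bsub>A Mod J\<^esub> (t::int)"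
  proof -
    from fac' show ?thesis
    proof
      assume "infinite F \<and> (\<exists>g\<in>F. generate (A Mod J) {g} = F)"
      then obtain G0 where "G0 \<in> F" "generate (A Mod J) {G0} = F" by blast
      then obtain g where g: "g \<in> K" "generate (A Mod J) {\<pi> g} = F" unfolding F_def by blast
      have pg: "\<pi> g \<in> carrier (A Mod J)" using g KA by auto
      have "F = {\<pi> g [^]\<^bsub>A Mod J\<^esub> (k::int) | k. k \<in> UNIV}"
        using Q.generate_pow[OF pg] g(2) by simp
      then show ?thesis using gen_t[OF g(1)] that by metis
    next
      assume "Factorial_Ring.prime (card F)"
      then obtain h where "h \<in> F" "F = {h [^]\<^bsub>A Mod J\<^esub> (k::int) | k. k \<in> UNIV}"
        using prime_sub_cyclic[OF Q.group_axioms sF] by blast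
      then obtain g where g: "g \<in> K" "F = {\<pi> g [^]\<^bsub>A Mod J\<^esub> (k::int) | k. k \<in> UNIV}"
        unfolding F_def by blast
      then show ?thesis using gen_t[OF g(1) g(2)] that by metis
    qed
  qed
  have st: "\<pi> (brace_star A M b y) = \<pi> y [^]\<^bsub>A Mod J\<^esub> (t - 1)" if y: "y \<in> K" for y
  proof -
    have yc: "y \<in> carrier A" using y KA by auto
    have py: "\<pi> y \<in> carrier (A Mod J)" using yc by simp
    have "\<pi> (brace_star A M b y) = \<pi> (lam b y) \<otimes>\<^bsub>A Mod J\<^esub> inv\<^bsub>A Mod J\<^esub> (\<pi> y)"
      using star_eq b yc by simp
    also have "\<dots> = \<pi> y [^]\<^bsub>A Mod J\<^esub> t \<otimes>\<^bsub>A Mod J\<^esub> inv\<^bsub>A Mod J\<^esub> (\<pi> y [^]\<^bsub>A Mod J\<^esub> (1::int))"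
      using t y py by simp
    also have "\<dots> = \<pi> y [^]\<^bsub>A Mod J\<^esub> (t - 1)" using Q.int_pow_diff[OF py] by simp
    finally show ?thesis .
  qed
  have f0: "\<pi> x0 [^]\<^bsub>A Mod J\<^esub> (t - 1) \<noteq> \<one>\<^bsub>A Mod J\<^esub>"
  proof -
    have "brace_star A M b x0 \<notin> J" using starJ[OF x0c] nx unfolding J_def by simp
    moreover have "brace_star A M b x0 \<in> carrier A" using star_eq b x0c by simp
    ultimately have "\<pi> (brace_star A M b x0) \<noteq> \<one>\<^bsub>A Mod J\<^esub>" using piJ by blast
    then show ?thesis using st[OF x0K] by simp
  qed
  have inj: "\<pi> y [^]\<^bsub>A Mod J\<^esub> (t - 1) \<noteq> \<one>\<^bsub>A Mod J\<^esub>"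
    if y: "y \<in> K" and ny: "\<pi> y \<noteq> \<one>\<^bsub>A Mod J\<^esub>" for y
  proof
    assume e: "\<pi> y [^]\<^bsub>A Mod J\<^esub> (t - 1) = \<one>\<^bsub>A Mod J\<^esub>"
    have yc: "y \<in> carrier A" using y KA by auto
    have py: "\<pi> y \<in> carrier (A Mod J)" using yc by simp
    have px0: "\<pi> x0 \<in> carrier (A Mod J)" using x0c by simp
    from fac' show False
    proof
      assume "infinite F \<and> (\<exists>g\<in>F. generate (A Mod J) {g} = F)"
      then obtain G0 where inf: "infinite F" and "G0 \<in> F" "generate (A Mod J) {G0} = F" by blast
      then obtain g where g: "g \<in> K" "generate (A Mod J) {\<pi> g} = F" unfolding F_def by blast
      have pg: "\<pi> g \<in> carrier (A Mod J)" using g KA by auto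
      have Fg: "F = {\<pi> g [^]\<^bsub>A Mod J\<^esub> (k::int) | k. k \<in> UNIV}"
        using Q.generate_pow[OF pg] g(2) by simp
      have "Q.ord (\<pi> g) = card F" using Q.generate_pow_card[OF pg] g by simp
      then have o0: "Q.ord (\<pi> g) = 0" using inf by simp
      have pw: "\<pi> g [^]\<^bsub>A Mod J\<^esub> k = \<one>\<^bsub>A Mod J\<^esub> \<longleftrightarrow> k = 0" for k :: int
        using Q.int_pow_eq_id[OF pg, of k] o0 by simp
      have "\<pi> y \<in> F" using y F_def by simp
      then have "\<pi> y \<in> {\<pi> g [^]\<^bsub>A Mod J\<^esub> (k::int) | k. k \<in> UNIV}" by (simp only: Fg)
      then obtain m where m: "\<pi> y = \<pi> g [^]\<^bsub>A Mod J\<^esub> (m::int)" by blast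
      have "\<pi> x0 \<in> F" using x0K F_def by simp
      then have "\<pi> x0 \<in> {\<pi> g [^]\<^bsub>A Mod J\<^esub> (k::int) | k. k \<in> UNIV}" by (simp only: Fg)
      then obtain s where s: "\<pi> x0 = \<pi> g [^]\<^bsub>A Mod J\<^esub> (s::int)" by blast
      have "m \<noteq> 0" using m ny pw by auto
      moreover have "s * (t - 1) \<noteq> 0" using f0 s Q.int_pow_pow[OF pg] pw by simp
      moreover have "m * (t - 1) = 0" using e m Q.int_pow_pow[OF pg] pw by simp
      ultimately show False by simp
    next
      assume p: "Factorial_Ring.prime (card F)"
      then have pw: "\<forall>f\<in>F. f [^]\<^bsub>A Mod J\<^esub> (card F) = \<one>\<^bsub>A Mod J\<^esub>"
        using prime_sub_cyclic[OF Q.group_axioms sF] by blast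
      have "\<pi> y \<in> F" using y F_def by simp
      then have "Q.ord (\<pi> y) dvd card F" using pw Q.pow_eq_id[OF py] by blast
      moreover have "Q.ord (\<pi> y) \<noteq> 1" using Q.ord_eq_1[OF py] ny by simp
      ultimately have oy: "Q.ord (\<pi> y) = card F" using p unfolding prime_nat_iff by blast
      have d: "int (card F) dvd (t - 1)" using Q.int_pow_eq_id[OF py] e oy by simp
      have "\<pi> x0 \<in> F" using x0K F_def by simp
      then have "Q.ord (\<pi> x0) dvd card F" using pw Q.pow_eq_id[OF px0] by blast
      then have "int (Q.ord (\<pi> x0)) dvd (t - 1)" using d by (meson dvd_trans int_dvd_int_iff)
      then show False using Q.int_pow_eq_id[OF px0] f0 by simp
    qed
  qed
  define s where "s = (\<lambda>k. ((\<lambda>y. brace_star A M b y) ^^ k) x0)"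
  have seq: "s k \<in> K \<and> \<pi> (s k) \<noteq> \<one>\<^bsub>A Mod J\<^esub> \<and> s k \<in> left_series A M k" for k
  proof (induction k)
    case 0
    then show ?case using x0K x0c x0J piJ unfolding s_def by simp
  next
    case (Suc k)
    have sk: "s k \<in> K" and nk: "\<pi> (s k) \<noteq> \<one>\<^bsub>A Mod J\<^esub>" and lk: "s k \<in> left_series A M k"
      using Suc.IH by auto
    have skc: "s k \<in> carrier A" using sk KA by auto
    have eq: "s (Suc k) = brace_star A M b (s k)" unfolding s_def by simp
    have "s (Suc k) \<in> K" unfolding eq star_eq[OF b skc]
      using lamK[OF sk] sk sK by (simp add: subgroup.m_closed subgroup.m_inv_closed)
    moreover have "\<pi> (s (Suc k)) \<noteq> \<one>\<^bsub>A Mod J\<^esub>" unfolding eq using st[OF sk] inj[OF sk nk] by simp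
    moreover have "s (Suc k) \<in> left_series A M (Suc k)"
    proof -
      have "brace_star A M b (s k) \<in> (\<lambda>(x, y). brace_star A M x y) ` (carrier A \<times> left_series A M k)"
        using b lk by force
      then show ?thesis unfolding eq by (simp add: brace_star_set_def generate.incl)
    qed
    ultimately show ?case by blast
  qed
  then have "s m \<in> {\<one>\<^bsub>A\<^esub>}" and "\<pi> (s m) \<noteq> \<one>\<^bsub>A Mod J\<^esub>" using LN by auto
  then show False using piJ[of "\<one>\<^bsub>A\<^esub>"] sJ subgroup.one_closed by force
qed

end



context ssb begin

definition H where "H a = {b \<in> carrier A. \<forall>j x. j + a \<le> n \<longrightarrow> x \<in> I (j + a) \<longrightarrow>
   inv\<^bsub>A\<^esub> x \<otimes>\<^bsub>A\<^esub> lam b x \<in> I j}"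

lemma H1: "left_series A M m = {\<one>\<^bsub>A\<^esub>} \<Longrightarrow> b \<in> carrier A \<Longrightarrow> b \<in> H 1"
  unfolding H_def using T by auto

lemma H0: "b \<in> carrier A \<Longrightarrow> b \<in> H 0"
  unfolding H_def using lamI subI by (auto intro!: subgroup.m_closed subgroup.m_inv_closed)

lemma Hn: "b \<in> H n \<Longrightarrow> b \<in> brace_ker_lambda A M"
proof -
  assume b: "b \<in> H n"
  have bc: "b \<in> carrier A" using b H_def by auto
  have "lam b x = x" if x: "x \<in> carrier A" for x
  proof -
    have "inv\<^bsub>A\<^esub> x \<otimes>\<^bsub>A\<^esub> lam b x \<in> I 0" using b x In unfolding H_def by force
    then have "inv\<^bsub>A\<^esub> x \<otimes>\<^bsub>A\<^esub> lam b x = \<one>\<^bsub>A\<^esub>" using I0 by simp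
    then show ?thesis using x bc A.inv_solve_left' by (metis A.r_one lam_closed A.one_closed)
  qed
  then show ?thesis unfolding brace_ker_lambda_def lam_eq using bc by simp
qed

lemma decR: "subgroup S A \<Longrightarrow> x \<in> carrier A \<Longrightarrow> z \<in> carrier A \<Longrightarrow> inv\<^bsub>A\<^esub> x \<otimes>\<^bsub>A\<^esub> z \<in> S
   \<Longrightarrow> \<exists>u\<in>S. z = x \<otimes>\<^bsub>A\<^esub> u"
  by (rule bexI[of _ "inv\<^bsub>A\<^esub> x \<otimes>\<^bsub>A\<^esub> z"]) (simp_all add: A.m_assoc[symmetric])

lemma cancel1: "p \<in> carrier A \<Longrightarrow> w \<in> carrier A \<Longrightarrow> p \<otimes>\<^bsub>A\<^esub> inv\<^bsub>A\<^esub> w \<otimes>\<^bsub>A\<^esub> w = p"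
  by (simp add: A.m_assoc)

lemma cancel2: "r \<in> carrier A \<Longrightarrow> w \<in> carrier A \<Longrightarrow> inv\<^bsub>A\<^esub> w \<otimes>\<^bsub>A\<^esub> (w \<otimes>\<^bsub>A\<^esub> r) = r"
  by (simp add: A.m_assoc[symmetric])

lemma Hcomm:
  assumes LN: "left_series A M m = {\<one>\<^bsub>A\<^esub>}" and b: "b \<in> H a" and y: "y \<in> carrier A"
  shows "b \<otimes>\<^bsub>M\<^esub> y \<otimes>\<^bsub>M\<^esub> inv\<^bsub>M\<^esub> b \<otimes>\<^bsub>M\<^esub> inv\<^bsub>M\<^esub> y \<in> H (Suc a)"
proof -
  have bc: "b \<in> carrier A" using b H_def by auto
  have bM: "b \<in> carrier M" and yM: "y \<in> carrier M" using bc y carr by auto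
  define b' where "b' = inv\<^bsub>M\<^esub> b"
  define y' where "y' = inv\<^bsub>M\<^esub> y"
  have b'c: "b' \<in> carrier A" and y'c: "y' \<in> carrier A" unfolding b'_def y'_def using bc y by auto
  define c where "c = b \<otimes>\<^bsub>M\<^esub> y \<otimes>\<^bsub>M\<^esub> b' \<otimes>\<^bsub>M\<^esub> y'"
  have cc: "c \<in> carrier A" unfolding c_def using bc y b'c y'c by simp
  have yH: "y \<in> H 1" using H1[OF LN y] .
  have "inv\<^bsub>A\<^esub> z \<otimes>\<^bsub>A\<^esub> lam c z \<in> I j" if jn: "j + Suc a \<le> n" and z: "z \<in> I (j + Suc a)" for j z
  proof -
    have zc: "z \<in> carrier A" using z IA jn by auto
    define x where "x = lam b' (lam y' z)"
    have xI: "x \<in> I (j + Suc a)" unfolding x_def using lamI jn z b'c y'c by simp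
    have xc: "x \<in> carrier A" using xI IA jn by auto
    have lc: "lam c z = lam b (lam y x)"
      unfolding c_def x_def using bc y b'c y'c zc by (simp add: lam_comp)
    have "lam y (lam b x) = lam (y \<otimes>\<^bsub>M\<^esub> (b \<otimes>\<^bsub>M\<^esub> (b' \<otimes>\<^bsub>M\<^esub> y'))) z"
      unfolding x_def using bc y b'c y'c zc by (simp add: lam_comp)
    also have "y \<otimes>\<^bsub>M\<^esub> (b \<otimes>\<^bsub>M\<^esub> (b' \<otimes>\<^bsub>M\<^esub> y')) = \<one>\<^bsub>M\<^esub>"
      unfolding b'_def y'_def using bM yM by (simp add: M.m_assoc[symmetric])
    finally have zx: "z = lam y (lam b x)" using lam_oneM zc by simp
    have jn1: "Suc j + a \<le> n" and jn2: "(j + a) + 1 \<le> n" and jn3: "j + a \<le> n" and jn4: "j + 1 \<le> n"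
      and jn5: "j \<le> n" and jn6: "Suc j \<le> n" using jn by auto
    have xI1: "x \<in> I (Suc j + a)" and xI2: "x \<in> I ((j + a) + 1)" using xI by simp_all
    have u1: "inv\<^bsub>A\<^esub> x \<otimes>\<^bsub>A\<^esub> lam b x \<in> I (Suc j)" using b jn1 xI1 unfolding H_def by blast
    have "inv\<^bsub>A\<^esub> x \<otimes>\<^bsub>A\<^esub> lam y x \<in> I (j + a)" using yH jn2 xI2 unfolding H_def by blast
    then obtain v where vI: "v \<in> I (j + a)" and v: "lam y x = x \<otimes>\<^bsub>A\<^esub> v"
      using decR[OF subI[OF jn3] xc lam_closed[OF y xc]] by blast
    have vc: "v \<in> carrier A" using vI IA jn3 by auto
    have "inv\<^bsub>A\<^esub> v \<otimes>\<^bsub>A\<^esub> lam b v \<in> I j" using b jn3 vI unfolding H_def by blast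
    then obtain e where eI: "e \<in> I j" and e: "lam b v = v \<otimes>\<^bsub>A\<^esub> e"
      using decR[OF subI[OF jn5] vc lam_closed[OF bc vc]] by blast
    have ec: "e \<in> carrier A" using eI IA jn5 by auto
    define w where "w = lam b x \<otimes>\<^bsub>A\<^esub> inv\<^bsub>A\<^esub> x"
    have "x \<otimes>\<^bsub>A\<^esub> (inv\<^bsub>A\<^esub> x \<otimes>\<^bsub>A\<^esub> lam b x) \<otimes>\<^bsub>A\<^esub> inv\<^bsub>A\<^esub> x \<in> I (Suc j)"
      using normal.inv_op_closed2[OF normI[OF jn6] xc u1] .
    then have wI: "w \<in> I (Suc j)" unfolding w_def using xc bc by (simp add: A.m_assoc[symmetric])
    have wc: "w \<in> carrier A" using wI IA jn6 by auto
    have w: "lam b x = w \<otimes>\<^bsub>A\<^esub> x" unfolding w_def using xc bc by (simp add: A.m_assoc)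
    have "inv\<^bsub>A\<^esub> w \<otimes>\<^bsub>A\<^esub> lam y w \<in> I j" using yH jn4 wI unfolding H_def by force
    then obtain e' where e'I: "e' \<in> I j" and e': "lam y w = w \<otimes>\<^bsub>A\<^esub> e'"
      using decR[OF subI[OF jn5] wc lam_closed[OF y wc]] by blast
    have e'c: "e' \<in> carrier A" using e'I IA jn5 by auto
    have L1: "lam b (lam y x) = (w \<otimes>\<^bsub>A\<^esub> x) \<otimes>\<^bsub>A\<^esub> (v \<otimes>\<^bsub>A\<^esub> e)"
      using v lam_add bc xc vc e w by simp
    have L2: "lam y (lam b x) = (w \<otimes>\<^bsub>A\<^esub> e') \<otimes>\<^bsub>A\<^esub> (x \<otimes>\<^bsub>A\<^esub> v)"
      using w lam_add y xc wc e' v by simp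
    define Y where "Y = x \<otimes>\<^bsub>A\<^esub> v"
    have Yc: "Y \<in> carrier A" unfolding Y_def using xc vc by simp
    have "inv\<^bsub>A\<^esub> z \<otimes>\<^bsub>A\<^esub> lam c z = inv\<^bsub>A\<^esub> (lam y (lam b x)) \<otimes>\<^bsub>A\<^esub> lam b (lam y x)"
      unfolding lc by (subst zx) (rule refl)
    also have "\<dots> = inv\<^bsub>A\<^esub> ((w \<otimes>\<^bsub>A\<^esub> e') \<otimes>\<^bsub>A\<^esub> Y) \<otimes>\<^bsub>A\<^esub> (w \<otimes>\<^bsub>A\<^esub> Y \<otimes>\<^bsub>A\<^esub> e)"
      unfolding L1 L2 Y_def using xc vc wc ec by (simp add: A.m_assoc)
    also have "\<dots> = (inv\<^bsub>A\<^esub> Y \<otimes>\<^bsub>A\<^esub> inv\<^bsub>A\<^esub> e' \<otimes>\<^bsub>A\<^esub> Y) \<otimes>\<^bsub>A\<^esub> e"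
      using Yc wc e'c ec by (simp add: A.inv_mult_group A.m_assoc cancel2)
    finally have eq: "inv\<^bsub>A\<^esub> z \<otimes>\<^bsub>A\<^esub> lam c z = (inv\<^bsub>A\<^esub> Y \<otimes>\<^bsub>A\<^esub> inv\<^bsub>A\<^esub> e' \<otimes>\<^bsub>A\<^esub> Y) \<otimes>\<^bsub>A\<^esub> e" .
    have "(inv\<^bsub>A\<^esub> Y \<otimes>\<^bsub>A\<^esub> inv\<^bsub>A\<^esub> e' \<otimes>\<^bsub>A\<^esub> Y) \<otimes>\<^bsub>A\<^esub> e \<in> I j"
    proof -
      have "inv\<^bsub>A\<^esub> e' \<in> I j" by (rule subgroup.m_inv_closed[OF subI[OF jn5] e'I])
      then have "inv\<^bsub>A\<^esub> Y \<otimes>\<^bsub>A\<^esub> inv\<^bsub>A\<^esub> e' \<otimes>\<^bsub>A\<^esub> Y \<in> I j"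
        by (rule normal.inv_op_closed1[OF normI[OF jn5] Yc])
      then show ?thesis by (rule subgroup.m_closed[OF subI[OF jn5] _ eI])
    qed
    then show ?thesis using eq by simp
  qed
  then show ?thesis unfolding H_def c_def b'_def y'_def using cc[unfolded c_def b'_def y'_def] by blast
qed

end

theorem theorem3p32:
  fixes A M :: "'a monoid"
  assumes "supersoluble_brace A M"
    and "left_nilpotent A M"
    and "\<exists>n. brace_ker_lambda A M \<subseteq> upper_central M n"
  shows "nilpotent_group M"
proof -
  have br: "brace A M" using assms(1) unfolding supersoluble_brace_def by blast
  interpret brc A M using brace_brc[OF br] .
  obtain I n where I0: "I 0 = {\<one>\<^bsub>A\<^esub>}" and In: "I n = carrier A"
    and idl: "\<forall>i\<le>n. brace_ideal A M (I i)"
    and rest: "\<forall>i<n. I i \<subseteq> I (Suc i) \<and>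
         (let F = quot_sub A (I i) (I (Suc i)) in
           (infinite F \<and> (\<exists>g\<in>F. generate (quot_add A (I i)) {g} = F) \<and>
              F \<subseteq> brace_soc (quot_add A (I i)) (quot_mult A M (I i)))
           \<or> Factorial_Ring.prime (card F))"
    using assms(1) unfolding supersoluble_brace_def by blast
  interpret S: ssb A M I n
  proof
    show "I 0 = {\<one>\<^bsub>A\<^esub>}" by fact
    show "I n = carrier A" by fact
    show "\<And>i. i \<le> n \<Longrightarrow> brace_ideal A M (I i)" using idl by blast
    show "\<And>i. i < n \<Longrightarrow> I i \<subseteq> I (Suc i)" using rest by blast
    fix i assume "i < n"
    then show "(infinite (quot_sub A (I i) (I (Suc i))) \<and>
      (\<exists>g\<in>quot_sub A (I i) (I (Suc i)). generate (A Mod (I i)) {g} = quot_sub A (I i) (I (Suc i))))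
      \<or> Factorial_Ring.prime (card (quot_sub A (I i) (I (Suc i))))"
      using rest unfolding quot_add_def Let_def by blast
  qed
  obtain m where LN: "left_series A M m = {\<one>\<^bsub>A\<^esub>}" using assms(2) unfolding left_nilpotent_def by blast
  obtain N where KN: "brace_ker_lambda A M \<subseteq> upper_central M N" using assms(3) by blast
  have claim: "k \<le> n \<Longrightarrow> S.H (n - k) \<subseteq> upper_central M (N + k)" for k
  proof (induction k)
    case 0
    then show ?case using S.Hn KN by auto
  next
    case (Suc k)
    show ?case
    proof
      fix b assume b: "b \<in> S.H (n - Suc k)"
      have bc: "b \<in> carrier A" using b S.H_def by auto
      have "b \<otimes>\<^bsub>M\<^esub> y \<otimes>\<^bsub>M\<^esub> inv\<^bsub>M\<^esub> b \<otimes>\<^bsub>M\<^esub> inv\<^bsub>M\<^esub> y \<in> upper_central M (N + k)"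
        if y: "y \<in> carrier M" for y
      proof -
        have "b \<otimes>\<^bsub>M\<^esub> y \<otimes>\<^bsub>M\<^esub> inv\<^bsub>M\<^esub> b \<otimes>\<^bsub>M\<^esub> inv\<^bsub>M\<^esub> y \<in> S.H (Suc (n - Suc k))"
          using S.Hcomm[OF LN b] y carr by simp
        moreover have "Suc (n - Suc k) = n - k" using Suc.prems by simp
        ultimately show ?thesis using Suc.IH Suc.prems by auto
      qed
      then show "b \<in> upper_central M (N + Suc k)" using bc carr by simp
    qed
  qed
  have "carrier M \<subseteq> upper_central M (N + n)"
    using claim[of n] S.H0 carr by auto
  moreover have "upper_central M c \<subseteq> carrier M" for c
    by (cases c) auto
  ultimately have "upper_central M (N + n) = carrier M" by blast
  then show ?thesis unfolding nilpotent_group_def using M.group_axioms by blast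
qed


end
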